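(* Let $K\subset\mathbf{R}^d$ ($d\ge1$) be a convex compact subset, $T:\mathscr{C}(K)\to\mathscr{C}(K)$ a Markov operator such that $T(h)=h$ for every continuous affine function $h$ on $K$, $a\ge0$, and $(\mu_n)_{n\ge1}$ a sequence of Borel probability measures on $K$. Then for every $f\in\mathscr{C}(K)$, $n\ge1$ and $x\in K$, $$|C_n(f)(x)-f(x)|\le 2\,\omega\Big(f,\frac{1}{n+a}\sqrt{a^2\int_K d_x^2\,d\mu_n+n\big(T(e_2)(x)-e_2(x)\big)}\Big).$$ Moreover, $$\|C_n(f)-f\|_\infty\le 2\,\omega\Big(f,\sqrt{\frac{\max\big(a\,\mathrm{diam}(K)^2,\ \|T(e_2)-e_2\|_\infty\big)}{n+a}}\Big),$$ where $\mathrm{diam}(K)=\sup\{\|x-y\|_2:x,y\in K\}$.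
   Context: A Markov operator is a positive linear operator $T$ on $\mathscr{C}(K)$ with $T(\mathbf{1})=\mathbf{1}$; $(\tilde\mu_x^T)_{x\in K}$ are the Borel probability measures with $\int_K f\,d\tilde\mu_x^T=T(f)(x)$. $C_n(f)(x)=\int_K\cdots\int_K f\big(\frac{x_1+\dots+x_n+a x_{n+1}}{n+a}\big)\,d\tilde\mu_x^T(x_1)\cdots d\tilde\mu_x^T(x_n)\,d\mu_n(x_{n+1})$. $\|\cdot\|_2$ is the Euclidean norm, $e_2(x)=\|x\|_2^2$, $d_x(y)=\|y-x\|_2$, and $\omega(f,\delta)=\sup\{|f(x)-f(y)|:x,y\in K,\ \|x-y\|_2\le\delta\}$. *)

theory Defs
  imports "HOL-Probability.Probability"
begin

text \<open>Markov operator on C(K), represented on functions 'a => real, all conditions relativised to K.\<close>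
definition markov_operator :: "'a::euclidean_space set \<Rightarrow> (('a \<Rightarrow> real) \<Rightarrow> ('a \<Rightarrow> real)) \<Rightarrow> bool" where
  "markov_operator K T \<longleftrightarrow>
     (\<forall>f. continuous_on K f \<longrightarrow> continuous_on K (T f)) \<and>
     (\<forall>f g. continuous_on K f \<longrightarrow> continuous_on K g \<longrightarrow>
        (\<forall>x\<in>K. T (\<lambda>y. f y + g y) x = T f x + T g x)) \<and>
     (\<forall>f c. continuous_on K f \<longrightarrow> (\<forall>x\<in>K. T (\<lambda>y. c * f y) x = c * T f x)) \<and>
     (\<forall>f. continuous_on K f \<longrightarrow> (\<forall>x\<in>K. f x \<ge> 0) \<longrightarrow> (\<forall>x\<in>K. T f x \<ge> 0)) \<and>
     (\<forall>x\<in>K. T (\<lambda>_. 1) x = 1)"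

definition borel_prob_on :: "'a::euclidean_space set \<Rightarrow> 'a measure \<Rightarrow> bool" where
  "borel_prob_on K M \<longleftrightarrow> prob_space M \<and> sets M = sets (restrict_space borel K)"

definition modulus :: "'a::euclidean_space set \<Rightarrow> ('a \<Rightarrow> real) \<Rightarrow> real \<Rightarrow> real" where
  "modulus K f \<delta> = Sup {\<bar>f x - f y\<bar> | x y. x \<in> K \<and> y \<in> K \<and> norm (x - y) \<le> \<delta>}"

definition C_op :: "('a::euclidean_space \<Rightarrow> 'a measure) \<Rightarrow> 'a measure \<Rightarrow> real \<Rightarrow> nat \<Rightarrow> ('a \<Rightarrow> real) \<Rightarrow> 'a \<Rightarrow> real" where
  "C_op nu mu a n f x =
     integral\<^sup>L (Pi\<^sub>M {..<n} (\<lambda>_. nu x) \<Otimes>\<^sub>M mu)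
       (\<lambda>(xs, y). f (((\<Sum>i<n. xs i) + a *\<^sub>R y) /\<^sub>R (real n + a)))"

definition e2 :: "'a::euclidean_space \<Rightarrow> real" where
  "e2 x = (norm x)\<^sup>2"

end

theory Submission
  imports Defs
begin

lemma bpo_space: "borel_prob_on K M \<Longrightarrow> space M = K"
proof -
  assume "borel_prob_on K M"
  then have "sets M = sets (restrict_space borel K)" unfolding borel_prob_on_def by simp
  then have "space M = space (restrict_space borel K)" by (rule sets_eq_imp_space_eq)
  then show ?thesis by (simp add: space_restrict_space)
qed

lemma bpo_prob: "borel_prob_on K M \<Longrightarrow> prob_space M"
  unfolding borel_prob_on_def by simp

lemma bpo_meas: "borel_prob_on K M \<Longrightarrow> continuous_on K g \<Longrightarrow> g \<in> borel_measurable M"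
proof -
  assume a: "borel_prob_on K M" "continuous_on K g"
  then have s: "sets M = sets (restrict_space borel K)" unfolding borel_prob_on_def by simp
  show ?thesis
    by (subst measurable_cong_sets[OF s refl]) (rule borel_measurable_continuous_on_restrict[OF a(2)])
qed

lemma int_bound:
  fixes g :: "_ \<Rightarrow> real"
  assumes "finite_measure M" "g \<in> borel_measurable M" "\<And>x. x \<in> space M \<Longrightarrow> \<bar>g x\<bar> \<le> B"
  shows "integrable M g"
  by (rule finite_measure.integrable_const_bound[OF assms(1), where B=B]) (auto intro!: AE_I2 assms)

lemma bpo_int:
  fixes g :: "'a::euclidean_space \<Rightarrow> real"
  assumes "borel_prob_on K M" "compact K" "continuous_on K g"
  shows "integrable M g"
proof -
  have "bounded (g ` K)" using assms compact_continuous_image compact_imp_bounded by blast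
  then obtain B where B: "\<And>t. t \<in> K \<Longrightarrow> \<bar>g t\<bar> \<le> B" unfolding bounded_iff by auto
  show ?thesis
    apply (rule int_bound[where B=B])
    using assms bpo_prob prob_space.finite_measure bpo_meas B bpo_space by blast+
qed

lemma comb_in:
  fixes K :: "'a::euclidean_space set"
  assumes K: "convex K" and n: "n \<ge> 1" and a: "a \<ge> 0"
    and xs: "\<And>k. k < n \<Longrightarrow> xs k \<in> K" and y: "y \<in> K"
  shows "((\<Sum>i<n. xs i) + a *\<^sub>R y) /\<^sub>R (real n + a) \<in> K"
proof -
  have m: "(\<Sum>i<n. (1 / real n) *\<^sub>R xs i) \<in> K"
    apply (rule convex_sum[OF _ K]) using n xs by auto
  have "real n \<ge> 1" using n by simp
  then have pos: "real n + a > 0" using a by linarith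
  have s1: "real n / (real n + a) + a / (real n + a) = 1" using pos by (simp add: add_divide_distrib[symmetric])
  have "(real n / (real n + a)) *\<^sub>R (\<Sum>i<n. (1 / real n) *\<^sub>R xs i) + (a / (real n + a)) *\<^sub>R y \<in> K"
    using pos a s1 by (intro convexD[OF K m y]) auto
  moreover have "(real n / (real n + a)) *\<^sub>R (\<Sum>i<n. (1 / real n) *\<^sub>R xs i) + (a / (real n + a)) *\<^sub>R y
     = ((\<Sum>i<n. xs i) + a *\<^sub>R y) /\<^sub>R (real n + a)"
  proof -
    have "real n > 0" using n by simp
    have e1: "(\<Sum>i<n. (1 / real n) *\<^sub>R xs i) = (1 / real n) *\<^sub>R (\<Sum>i<n. xs i)"
      by (simp only: scaleR_sum_right)
    have e2: "real n / (real n + a) * (1 / real n) = 1 / (real n + a)"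
      using \<open>real n > 0\<close> by simp
    have "(real n / (real n + a)) *\<^sub>R (\<Sum>i<n. (1 / real n) *\<^sub>R xs i) = (1 / (real n + a)) *\<^sub>R (\<Sum>i<n. xs i)"
      unfolding e1 scaleR_scaleR e2 ..
    moreover have "((\<Sum>i<n. xs i) + a *\<^sub>R y) /\<^sub>R (real n + a)
       = (1 / (real n + a)) *\<^sub>R (\<Sum>i<n. xs i) + (a / (real n + a)) *\<^sub>R y"
      by (simp add: scaleR_add_right divide_inverse_commute)
    ultimately show ?thesis by simp
  qed
  ultimately show ?thesis by simp
qed

context
  fixes K :: "'a::euclidean_space set" and f :: "'a \<Rightarrow> real"
  assumes K: "convex K" "compact K" and f: "continuous_on K f"
begin

lemma f_bound: obtains B where "\<And>t. t \<in> K \<Longrightarrow> \<bar>f t\<bar> \<le> B"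
proof -
  have "bounded (f ` K)" using K f compact_continuous_image compact_imp_bounded by blast
  then show ?thesis using that unfolding bounded_iff by auto
qed

lemma mod_bdd: "bdd_above {\<bar>f x - f y\<bar> | x y. x \<in> K \<and> y \<in> K \<and> norm (x - y) \<le> d}"
proof -
  obtain B where B: "\<And>t. t \<in> K \<Longrightarrow> \<bar>f t\<bar> \<le> B" using f_bound by blast
  have "\<forall>z\<in>{\<bar>f x - f y\<bar> | x y. x \<in> K \<and> y \<in> K \<and> norm (x - y) \<le> d}. z \<le> 2*B"
  proof clarify
    fix x y assume "x \<in> K" "y \<in> K"
    then show "\<bar>f x - f y\<bar> \<le> 2*B" using B[of x] B[of y] by linarith
  qed
  then show ?thesis unfolding bdd_above_def by blast
qed

lemma mod_le: assumes "x \<in> K" "y \<in> K" "norm (x - y) \<le> d" shows "\<bar>f x - f y\<bar> \<le> modulus K f d"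
  unfolding modulus_def apply (rule cSup_upper[OF _ mod_bdd])
  apply (rule CollectI) apply (rule exI[of _ x], rule exI[of _ y]) using assms by simp

lemma mod_nonneg: "K \<noteq> {} \<Longrightarrow> d \<ge> 0 \<Longrightarrow> modulus K f d \<ge> 0"
proof -
  assume "K \<noteq> {}" "d \<ge> 0"
  then obtain x where "x \<in> K" by blast
  then have "\<bar>f x - f x\<bar> \<le> modulus K f d" using \<open>d \<ge> 0\<close> by (intro mod_le) auto
  then show ?thesis by simp
qed

lemma mod_mono: "K \<noteq> {} \<Longrightarrow> 0 \<le> d1 \<Longrightarrow> d1 \<le> d2 \<Longrightarrow> modulus K f d1 \<le> modulus K f d2"
  unfolding modulus_def
proof (rule cSup_subset_mono[OF _ mod_bdd])
  assume "K \<noteq> {}" "0 \<le> d1" "d1 \<le> d2"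
  then obtain x where "x \<in> K" by blast
  then show "{\<bar>f x - f y\<bar> | x y. x \<in> K \<and> y \<in> K \<and> norm (x - y) \<le> d1} \<noteq> {}"
  proof -
    have "\<bar>f x - f x\<bar> \<in> {\<bar>f x - f y\<bar> | x y. x \<in> K \<and> y \<in> K \<and> norm (x - y) \<le> d1}"
      apply (rule CollectI) apply (rule exI[of _ x], rule exI[of _ x])
      using \<open>0 \<le> d1\<close> \<open>x \<in> K\<close> by simp
    then show ?thesis by blast
  qed
  show "{\<bar>f x - f y\<bar> | x y. x \<in> K \<and> y \<in> K \<and> norm (x - y) \<le> d1}
     \<subseteq> {\<bar>f x - f y\<bar> | x y. x \<in> K \<and> y \<in> K \<and> norm (x - y) \<le> d2}"
  proof (rule subsetI)
    fix z assume "z \<in> {\<bar>f x - f y\<bar> | x y. x \<in> K \<and> y \<in> K \<and> norm (x - y) \<le> d1}"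
    then obtain x y where xy: "z = \<bar>f x - f y\<bar>" "x \<in> K" "y \<in> K" "norm (x - y) \<le> d1"
      unfolding mem_Collect_eq by (elim exE conjE) simp
    have d2: "norm (x - y) \<le> d2" using xy \<open>d1 \<le> d2\<close> by linarith
    show "z \<in> {\<bar>f x - f y\<bar> | x y. x \<in> K \<and> y \<in> K \<and> norm (x - y) \<le> d2}"
      unfolding xy(1) apply (rule CollectI) apply (rule exI[of _ x], rule exI[of _ y])
      using xy d2 by simp
  qed
qed

lemma mod_mult:
  assumes u: "u \<in> K" and v: "v \<in> K" and m: "m > 0" and uv: "norm (u - v) \<le> real m * d"
  shows "\<bar>f u - f v\<bar> \<le> real m * modulus K f d"
proof -
  define p where "p k = u + (real k / real m) *\<^sub>R (v - u)" for k
  have pK: "p k \<in> K" if "k \<le> m" for k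
  proof -
    have "p k = (1 - real k / real m) *\<^sub>R u + (real k / real m) *\<^sub>R v"
      unfolding p_def by (simp add: algebra_simps)
    moreover have "(1 - real k / real m) *\<^sub>R u + (real k / real m) *\<^sub>R v \<in> K"
      apply (rule convexD[OF K(1) u v]) using that m by auto
    ultimately show ?thesis by simp
  qed
  have step: "norm (p k - p (Suc k)) \<le> d" for k
  proof -
    have e: "real (Suc k) / real m = real k / real m + 1 / real m" by (simp add: add_divide_distrib)
    have "p k - p (Suc k) = - ((1 / real m) *\<^sub>R (v - u))"
      unfolding p_def e scaleR_add_left by simp
    then have "norm (p k - p (Suc k)) = norm (u - v) / real m"
      by (simp add: norm_minus_commute)
    also have "\<dots> \<le> d" using uv m by (simp add: divide_le_eq mult.commute)
    finally show ?thesis .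
  qed
  have p0: "p 0 = u" and pm: "p m = v" unfolding p_def using m by auto
  have "f u - f v = (\<Sum>k<m. f (p k) - f (p (Suc k)))"
    by (subst sum_lessThan_telescope') (simp add: p0 pm)
  then have "\<bar>f u - f v\<bar> \<le> (\<Sum>k<m. \<bar>f (p k) - f (p (Suc k))\<bar>)"
    by (simp add: sum_abs)
  also have "\<dots> \<le> (\<Sum>k<m. modulus K f d)"
    by (intro sum_mono mod_le pK step) auto
  finally show ?thesis by simp
qed

lemma mod_quad:
  assumes ne: "K \<noteq> {}" and u: "u \<in> K" and v: "v \<in> K" and d: "d > 0"
  shows "\<bar>f u - f v\<bar> \<le> (1 + (norm (u - v))\<^sup>2 / d\<^sup>2) * modulus K f d"
proof (cases "u = v")
  case True
  then show ?thesis using mod_nonneg[OF ne, of d] d by simp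
next
  case False
  define l where "l = norm (u - v) / d"
  have l0: "l > 0" using False d unfolding l_def by simp
  define m where "m = nat \<lceil>l\<rceil>"
  have m0: "m > 0" using l0 unfolding m_def by simp
  have ml: "l \<le> real m" unfolding m_def by linarith
  have "norm (u - v) \<le> real m * d" using ml d unfolding l_def by (simp add: divide_le_eq)
  then have "\<bar>f u - f v\<bar> \<le> real m * modulus K f d" by (rule mod_mult[OF u v m0])
  also have "\<dots> \<le> (1 + l\<^sup>2) * modulus K f d"
  proof (rule mult_right_mono)
    show "0 \<le> modulus K f d" using mod_nonneg[OF ne] d by simp
    have "real m < l + 1" unfolding m_def using l0 by linarith
    show "real m \<le> 1 + l\<^sup>2"
    proof (cases "l \<le> 1")
      case True
      then have "m \<le> 1" unfolding m_def using l0 by (simp add: nat_le_iff)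
      then show ?thesis by (simp add: add_increasing2)
    next
      case False
      then have "l \<le> l\<^sup>2" by (simp add: power2_eq_square)
      then show ?thesis using \<open>real m < l + 1\<close> by linarith
    qed
  qed
  also have "(1 + l\<^sup>2) = (1 + (norm (u - v))\<^sup>2 / d\<^sup>2)" unfolding l_def by (simp add: power_divide)
  finally show ?thesis .
qed

end

lemma L0:
  fixes W :: "'b \<Rightarrow> 'a::euclidean_space"
  assumes M: "prob_space M"
    and m0: "\<And>c. integrable M (\<lambda>y. inner c (W y))" "\<And>c. (\<integral>y. inner c (W y) \<partial>M) = 0"
    and sq: "integrable M (\<lambda>y. (norm (W y))\<^sup>2)"
  shows "(\<integral>y. (norm (c + W y))\<^sup>2 \<partial>M) = (norm c)\<^sup>2 + (\<integral>y. (norm (W y))\<^sup>2 \<partial>M)"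
proof -
  have eq: "(norm (c + W y))\<^sup>2 = (norm c)\<^sup>2 + (inner (2 *\<^sub>R c) (W y) + (norm (W y))\<^sup>2)" for y
    by (simp add: power2_norm_eq_inner inner_add_left inner_add_right inner_commute algebra_simps)
  have "(\<integral>y. (norm (c + W y))\<^sup>2 \<partial>M) = (\<integral>y. (norm c)\<^sup>2 + (inner (2 *\<^sub>R c) (W y) + (norm (W y))\<^sup>2) \<partial>M)"
    by (simp only: eq)
  also have "\<dots> = (\<integral>y. (norm c)\<^sup>2 \<partial>M) + (\<integral>y. inner (2 *\<^sub>R c) (W y) + (norm (W y))\<^sup>2 \<partial>M)"
  proof -
    have ic: "integrable M (\<lambda>y. (norm c)\<^sup>2)"
      using M by (simp add: prob_space.finite_measure finite_measure.integrable_const)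
    have i2: "integrable M (\<lambda>y. inner (2 *\<^sub>R c) (W y) + (norm (W y))\<^sup>2)"
      by (rule Bochner_Integration.integrable_add[OF m0(1)[of "2 *\<^sub>R c"] sq])
    show ?thesis using Bochner_Integration.integral_add[OF ic i2] by simp
  qed
  also have "\<dots> = (norm c)\<^sup>2 + ((\<integral>y. inner (2 *\<^sub>R c) (W y) \<partial>M) + (\<integral>y. (norm (W y))\<^sup>2 \<partial>M))"
    using M m0(1)[of "2 *\<^sub>R c"] sq by (simp add: prob_space.prob_space Bochner_Integration.integral_add del: inner_scaleR_left)
  also have "\<dots> = (norm c)\<^sup>2 + (\<integral>y. (norm (W y))\<^sup>2 \<partial>M)" using m0 by simp
  finally show ?thesis .
qed

lemma PiM_comp:
  fixes g :: "'b \<Rightarrow> real"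
  assumes N: "prob_space N" and k: "k \<in> I" and g: "g \<in> borel_measurable N"
  shows "(\<integral>xs. g (xs k) \<partial>PiM I (\<lambda>_. N)) = integral\<^sup>L N g"
    and "integrable N g \<Longrightarrow> integrable (PiM I (\<lambda>_. N)) (\<lambda>xs. g (xs k))"
proof -
  have D: "distr (PiM I (\<lambda>_. N)) N (\<lambda>\<omega>. \<omega> k) = N"
    using distr_PiM_component[of I "\<lambda>_. N" k] N k by simp
  have ms: "(\<lambda>\<omega>. \<omega> k) \<in> measurable (PiM I (\<lambda>_. N)) N"
    using measurable_component_singleton[OF k, of "\<lambda>_. N"] by simp
  show "(\<integral>xs. g (xs k) \<partial>PiM I (\<lambda>_. N)) = integral\<^sup>L N g"
    using integral_distr[OF ms g] D by simp
  show "integrable N g \<Longrightarrow> integrable (PiM I (\<lambda>_. N)) (\<lambda>xs. g (xs k))"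
    using integrable_distr_eq[OF ms g] D by simp
qed

lemma sum_bound_K:
  fixes K :: "'a::euclidean_space set"
  assumes "compact K" "x0 \<in> K" "\<And>k. k < n \<Longrightarrow> xs k \<in> K"
  shows "norm (\<Sum>k<n. xs k - x0) \<le> real n * diameter K"
proof -
  have "norm (\<Sum>k<n. xs k - x0) \<le> (\<Sum>k<n. norm (xs k - x0))" by (rule norm_sum)
  also have "\<dots> \<le> (\<Sum>k<n. diameter K)"
  proof (rule sum_mono)
    fix k assume "k \<in> {..<n}"
    then have "dist (xs k) x0 \<le> diameter K"
      using assms by (intro diameter_bounded_bound) (auto simp: compact_imp_bounded)
    then show "norm (xs k - x0) \<le> diameter K" by (simp add: dist_norm)
  qed
  finally show ?thesis by simp
qed

context
  fixes K :: "'a::euclidean_space set" and N :: "'a measure" and x0 :: 'a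
  assumes bpo: "borel_prob_on K N" and cK: "compact K" and x0: "x0 \<in> K"
    and mean: "\<And>c. (\<integral>t. inner c (t - x0) \<partial>N) = 0"
begin

lemma N_prob: "prob_space N" using bpo bpo_prob by blast
lemma N_space: "space N = K" using bpo bpo_space by blast

lemma N_id[measurable]: "(\<lambda>t. t) \<in> borel_measurable N"
  using bpo_meas[OF bpo] continuous_on_id by blast

lemma N_int_inner: "integrable N (\<lambda>t. inner c (t - x0))"
  by (rule bpo_int[OF bpo cK]) (intro continuous_intros)

lemma N_int_sq: "integrable N (\<lambda>t. (norm (t - x0))\<^sup>2)"
  by (rule bpo_int[OF bpo cK]) (intro continuous_intros)

lemma P_prob: "prob_space (PiM I (\<lambda>_. N))"
  using N_prob by (intro prob_space_PiM) auto

lemma P_space: "xs \<in> space (PiM I (\<lambda>_. N)) \<Longrightarrow> k \<in> I \<Longrightarrow> xs k \<in> K"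
  using N_space by (auto simp: space_PiM PiE_iff)

lemma S_meas[measurable]: "(\<lambda>xs. \<Sum>k<n. xs k - x0) \<in> borel_measurable (PiM {..<n} (\<lambda>_. N))"
  by measurable

lemma S_mean:
  shows "integrable (PiM {..<n} (\<lambda>_. N)) (\<lambda>xs. inner c (\<Sum>k<n. xs k - x0))"
    and "(\<integral>xs. inner c (\<Sum>k<n. xs k - x0) \<partial>PiM {..<n} (\<lambda>_. N)) = 0"
proof -
  have m: "(\<lambda>t. inner c (t - x0)) \<in> borel_measurable N" by measurable
  have i: "integrable (PiM {..<n} (\<lambda>_. N)) (\<lambda>xs. inner c (xs k - x0))" if "k < n" for k
    using that by (intro PiM_comp(2)[OF N_prob _ m N_int_inner]) simp
  have e: "(\<integral>xs. inner c (xs k - x0) \<partial>PiM {..<n} (\<lambda>_. N)) = 0" if "k < n" for k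
    using that by (subst PiM_comp(1)[OF N_prob _ m]) (simp_all add: mean)
  show "integrable (PiM {..<n} (\<lambda>_. N)) (\<lambda>xs. inner c (\<Sum>k<n. xs k - x0))"
    unfolding inner_sum_right using i by (intro Bochner_Integration.integrable_sum) auto
  show "(\<integral>xs. inner c (\<Sum>k<n. xs k - x0) \<partial>PiM {..<n} (\<lambda>_. N)) = 0"
    unfolding inner_sum_right using i e by (subst Bochner_Integration.integral_sum) auto
qed

lemma S_sq_int: fixes n :: nat shows "integrable (PiM {..<n} (\<lambda>_. N)) (\<lambda>xs. (norm (\<Sum>k<n. xs k - x0))\<^sup>2)"
proof (rule int_bound[where B="(real n * diameter K)\<^sup>2"])
  show "finite_measure (PiM {..<n} (\<lambda>_. N))" by (rule prob_space.finite_measure[OF P_prob])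
  show "(\<lambda>xs. (norm (\<Sum>k<n. xs k - x0))\<^sup>2) \<in> borel_measurable (PiM {..<n} (\<lambda>_. N))" by measurable
  fix xs assume "xs \<in> space (PiM {..<n} (\<lambda>_. N))"
  then have "norm (\<Sum>k<n. xs k - x0) \<le> real n * diameter K"
    using P_space[of xs "{..<n}"] by (intro sum_bound_K[OF cK x0]) auto
  then show "\<bar>(norm (\<Sum>k<n. xs k - x0))\<^sup>2\<bar> \<le> (real n * diameter K)\<^sup>2"
    by (simp add: power_mono)
qed

lemma P1_facts:
  "\<And>c. integrable (PiM {m} (\<lambda>_. N)) (\<lambda>y. inner c (y m - x0))"
  "\<And>c. (\<integral>y. inner c (y m - x0) \<partial>PiM {m} (\<lambda>_. N)) = 0"
  "integrable (PiM {m} (\<lambda>_. N)) (\<lambda>y. (norm (y m - x0))\<^sup>2)"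
  "(\<integral>y. (norm (y m - x0))\<^sup>2 \<partial>PiM {m} (\<lambda>_. N)) = (\<integral>t. (norm (t - x0))\<^sup>2 \<partial>N)"
proof -
  fix c
  have m: "(\<lambda>t. inner c (t - x0)) \<in> borel_measurable N" by measurable
  have m2: "(\<lambda>t. (norm (t - x0))\<^sup>2) \<in> borel_measurable N" by measurable
  show "integrable (PiM {m} (\<lambda>_. N)) (\<lambda>y. inner c (y m - x0))"
    by (rule PiM_comp(2)[OF N_prob _ m N_int_inner]) simp
  show "(\<integral>y. inner c (y m - x0) \<partial>PiM {m} (\<lambda>_. N)) = 0"
    by (subst PiM_comp(1)[OF N_prob _ m]) (simp_all add: mean)
  show "integrable (PiM {m} (\<lambda>_. N)) (\<lambda>y. (norm (y m - x0))\<^sup>2)"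
    by (rule PiM_comp(2)[OF N_prob _ m2 N_int_sq]) simp
  show "(\<integral>y. (norm (y m - x0))\<^sup>2 \<partial>PiM {m} (\<lambda>_. N)) = (\<integral>t. (norm (t - x0))\<^sup>2 \<partial>N)"
    by (rule PiM_comp(1)[OF N_prob _ m2]) simp
qed

lemma S_sq: fixes n :: nat
  shows "(\<integral>xs. (norm (\<Sum>k<n. xs k - x0))\<^sup>2 \<partial>PiM {..<n} (\<lambda>_. N)) = real n * (\<integral>t. (norm (t - x0))\<^sup>2 \<partial>N)"
proof (induction n)
  case 0
  then show ?case by simp
next
  case (Suc n)
  interpret PS: product_sigma_finite "\<lambda>_::nat. N"
    unfolding product_sigma_finite_def by (intro allI prob_space_imp_sigma_finite N_prob)
  let ?P = "PiM {..<n} (\<lambda>_. N)"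
  let ?P1 = "PiM {n} (\<lambda>_::nat. N)"
  interpret PP: pair_sigma_finite ?P ?P1
    unfolding pair_sigma_finite_def by (intro conjI prob_space_imp_sigma_finite P_prob)
  define V where "V = (\<integral>t. (norm (t - x0))\<^sup>2 \<partial>N)"
  define F where "F = (\<lambda>xs::nat\<Rightarrow>'a. (norm (\<Sum>k<Suc n. xs k - x0))\<^sup>2)"
  define G where "G = (\<lambda>\<omega>::(nat\<Rightarrow>'a)\<times>(nat\<Rightarrow>'a). (norm ((\<Sum>k<n. fst \<omega> k - x0) + (snd \<omega> n - x0)))\<^sup>2)"
  have U: "{..<n} \<union> {n} = {..<Suc n}" by auto
  have D: "distr (?P \<Otimes>\<^sub>M ?P1) (PiM {..<Suc n} (\<lambda>_. N)) (merge {..<n} {n}) = PiM {..<Suc n} (\<lambda>_. N)"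
    using PS.distr_merge[of "{..<n}" "{n}"] U by simp
  have Fm: "F \<in> borel_measurable (PiM {..<Suc n} (\<lambda>_. N))" unfolding F_def by measurable
  have mm: "merge {..<n} {n} \<in> measurable (?P \<Otimes>\<^sub>M ?P1) (PiM {..<Suc n} (\<lambda>_. N))"
    using measurable_merge[of "{..<n}" "{n}" "\<lambda>_. N"] U by simp
  have Gm: "G \<in> borel_measurable (?P \<Otimes>\<^sub>M ?P1)" unfolding G_def by measurable
  have Gi: "integrable (?P \<Otimes>\<^sub>M ?P1) G"
  proof (rule int_bound[OF _ Gm, where B="((real n + 1) * diameter K)\<^sup>2"])
    show "finite_measure (?P \<Otimes>\<^sub>M ?P1)"
      by (intro prob_space.finite_measure prob_space_pair P_prob)
    fix \<omega> assume "\<omega> \<in> space (?P \<Otimes>\<^sub>M ?P1)"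
    then have s1: "fst \<omega> \<in> space ?P" and s2: "snd \<omega> \<in> space ?P1" by (auto simp: space_pair_measure)
    have b1: "norm (\<Sum>k<n. fst \<omega> k - x0) \<le> real n * diameter K"
      using P_space[OF s1] by (intro sum_bound_K[OF cK x0]) auto
    have b2: "norm (snd \<omega> n - x0) \<le> diameter K"
    proof -
      have "snd \<omega> n \<in> K" using P_space[OF s2] by simp
      then have "dist (snd \<omega> n) x0 \<le> diameter K"
        by (rule diameter_bounded_bound[OF compact_imp_bounded[OF cK] _ x0])
      then show ?thesis by (simp add: dist_norm)
    qed
    have "norm ((\<Sum>k<n. fst \<omega> k - x0) + (snd \<omega> n - x0)) \<le> (real n + 1) * diameter K"
    proof -
      have e: "(real n + 1) * diameter K = real n * diameter K + diameter K" by (simp add: algebra_simps)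
      show ?thesis using norm_triangle_ineq[of "\<Sum>k<n. fst \<omega> k - x0" "snd \<omega> n - x0"] b1 b2
        unfolding e by linarith
    qed
    then show "\<bar>G \<omega>\<bar> \<le> ((real n + 1) * diameter K)\<^sup>2"
      unfolding G_def by (simp add: power_mono)
  qed
  have "(\<integral>xs. (norm (\<Sum>k<Suc n. xs k - x0))\<^sup>2 \<partial>PiM {..<Suc n} (\<lambda>_. N)) = integral\<^sup>L (PiM {..<Suc n} (\<lambda>_. N)) F"
    unfolding F_def ..
  also have "\<dots> = (\<integral>\<omega>. F (merge {..<n} {n} \<omega>) \<partial>(?P \<Otimes>\<^sub>M ?P1))"
    using integral_distr[OF mm Fm] D by simp
  also have "\<dots> = integral\<^sup>L (?P \<Otimes>\<^sub>M ?P1) G"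
  proof (rule Bochner_Integration.integral_cong[OF refl])
    fix \<omega> :: "(nat\<Rightarrow>'a)\<times>(nat\<Rightarrow>'a)"
    obtain x y where w: "\<omega> = (x, y)" by fastforce
    have "(\<Sum>k<Suc n. merge {..<n} {n} (x, y) k - x0) = (\<Sum>k<n. x k - x0) + (y n - x0)"
      by (simp add: sum.lessThan_Suc merge_def)
    then show "F (merge {..<n} {n} \<omega>) = G \<omega>" unfolding F_def G_def w by simp
  qed
  also have "\<dots> = (\<integral>x. (\<integral>y. G (x, y) \<partial>?P1) \<partial>?P)"
    by (rule PP.integral_fst'[OF Gi, symmetric])
  also have "\<dots> = (\<integral>x. (norm (\<Sum>k<n. x k - x0))\<^sup>2 + V \<partial>?P)"
  proof (rule Bochner_Integration.integral_cong[OF refl])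
    fix x :: "nat \<Rightarrow> 'a"
    show "(\<integral>y. G (x, y) \<partial>?P1) = (norm (\<Sum>k<n. x k - x0))\<^sup>2 + V"
      unfolding G_def fst_conv snd_conv V_def
      using L0[OF P_prob P1_facts(1) P1_facts(2) P1_facts(3), of n "\<Sum>k<n. x k - x0"] P1_facts(4)[of n]
      by simp
  qed
  also have "\<dots> = real n * V + V"
    using Bochner_Integration.integral_add[OF S_sq_int[of n] finite_measure.integrable_const[OF prob_space.finite_measure[OF P_prob[of "{..<n}"]], of V]]
      Suc.IH prob_space.prob_space[OF P_prob[of "{..<n}"]] unfolding V_def by simp
  finally show ?case unfolding V_def by (simp add: algebra_simps)
qed

end

context
  fixes K :: "'a::euclidean_space set" and N :: "'a measure" and x0 :: 'a
    and M :: "'a measure" and n :: nat and a :: real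
  assumes bpo: "borel_prob_on K N" and cK: "compact K" and cvK: "convex K" and x0: "x0 \<in> K"
    and mean: "\<And>c. (\<integral>t. inner c (t - x0) \<partial>N) = 0"
    and bpoM: "borel_prob_on K M" and n: "n \<ge> 1" and a: "a \<ge> 0"
begin

definition "cb = (\<lambda>\<omega>::(nat \<Rightarrow> 'a) \<times> 'a. ((\<Sum>i<n. fst \<omega> i) + a *\<^sub>R snd \<omega>) /\<^sub>R (real n + a))"

lemma pos: "real n + a > 0"
proof -
  have "real n \<ge> 1" using n by simp
  then show ?thesis using a by linarith
qed

lemma N_id2[measurable]: "(\<lambda>t. t) \<in> borel_measurable N"
  using bpo_meas[OF bpo] continuous_on_id by blast

lemma M_prob: "prob_space M" using bpoM bpo_prob by blast
lemma M_space: "space M = K" using bpoM bpo_space by blast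
lemma M_id[measurable]: "(\<lambda>t. t) \<in> borel_measurable M"
  using bpo_meas[OF bpoM] continuous_on_id by blast

lemma Q_prob: "prob_space (PiM {..<n} (\<lambda>_. N) \<Otimes>\<^sub>M M)"
  by (intro prob_space_pair P_prob[OF bpo cK x0 mean] M_prob)

lemma Q_space: "\<omega> \<in> space (PiM {..<n} (\<lambda>_. N) \<Otimes>\<^sub>M M) \<Longrightarrow> (\<forall>k<n. fst \<omega> k \<in> K) \<and> snd \<omega> \<in> K"
proof -
  assume "\<omega> \<in> space (PiM {..<n} (\<lambda>_. N) \<Otimes>\<^sub>M M)"
  then have "fst \<omega> \<in> space (PiM {..<n} (\<lambda>_. N))" "snd \<omega> \<in> space M"
    by (auto simp: space_pair_measure)
  then show ?thesis using P_space[OF bpo cK x0 mean, of "fst \<omega>" "{..<n}"] M_space by blast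
qed

lemma cb_in: "\<omega> \<in> space (PiM {..<n} (\<lambda>_. N) \<Otimes>\<^sub>M M) \<Longrightarrow> cb \<omega> \<in> K"
proof -
  assume h: "\<omega> \<in> space (PiM {..<n} (\<lambda>_. N) \<Otimes>\<^sub>M M)"
  have q: "\<forall>k<n. fst \<omega> k \<in> K" "snd \<omega> \<in> K" using Q_space[OF h] by auto
  show ?thesis unfolding cb_def by (rule comb_in[OF cvK n a]) (use q in auto)
qed

lemma cb_meas[measurable]: "cb \<in> borel_measurable (PiM {..<n} (\<lambda>_. N) \<Otimes>\<^sub>M M)"
  unfolding cb_def by measurable

lemma cb_diff: "cb \<omega> - x0 = ((\<Sum>k<n. fst \<omega> k - x0) + a *\<^sub>R (snd \<omega> - x0)) /\<^sub>R (real n + a)"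
proof -
  have "(\<Sum>k<n. fst \<omega> k - x0) + a *\<^sub>R (snd \<omega> - x0) = ((\<Sum>i<n. fst \<omega> i) + a *\<^sub>R snd \<omega>) - (real n + a) *\<^sub>R x0"
    by (simp add: sum_subtractf scaleR_diff_right scaleR_add_left sum_constant_scaleR)
  note e = this
  have c0: "real n + a \<noteq> 0" using pos by simp
  have "cb \<omega> - x0 = (((\<Sum>i<n. fst \<omega> i) + a *\<^sub>R snd \<omega>) - (real n + a) *\<^sub>R x0) /\<^sub>R (real n + a)"
    unfolding cb_def by (simp only: scaleR_diff_right scaleR_scaleR) (simp add: c0)
  then show ?thesis unfolding e[symmetric] .
qed

lemma E_eq:
  "(\<integral>\<omega>. (norm (cb \<omega> - x0))\<^sup>2 \<partial>(PiM {..<n} (\<lambda>_. N) \<Otimes>\<^sub>M M))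
     = (a\<^sup>2 * (\<integral>y. (norm (y - x0))\<^sup>2 \<partial>M) + real n * (\<integral>t. (norm (t - x0))\<^sup>2 \<partial>N)) / (real n + a)\<^sup>2"
  and E_int: "integrable (PiM {..<n} (\<lambda>_. N) \<Otimes>\<^sub>M M) (\<lambda>\<omega>. (norm (cb \<omega> - x0))\<^sup>2)"
proof -
  interpret PQ: pair_sigma_finite "PiM {..<n} (\<lambda>_. N)" M
    unfolding pair_sigma_finite_def by (intro conjI prob_space_imp_sigma_finite P_prob[OF bpo cK x0 mean] M_prob)
  define V where "V = (\<integral>t. (norm (t - x0))\<^sup>2 \<partial>N)"
  define H where "H = (\<lambda>(xs, y). (norm (a *\<^sub>R (y - x0) + (\<Sum>k<n. xs k - x0)))\<^sup>2)"
  have Hm: "H \<in> borel_measurable (PiM {..<n} (\<lambda>_. N) \<Otimes>\<^sub>M M)" unfolding H_def by measurable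
  have Hi: "integrable (PiM {..<n} (\<lambda>_. N) \<Otimes>\<^sub>M M) H"
  proof (rule int_bound[OF _ Hm, where B="((real n + a) * diameter K)\<^sup>2"])
    show "finite_measure (PiM {..<n} (\<lambda>_. N) \<Otimes>\<^sub>M M)" by (rule prob_space.finite_measure[OF Q_prob])
    fix \<omega> assume "\<omega> \<in> space (PiM {..<n} (\<lambda>_. N) \<Otimes>\<^sub>M M)"
    then have s: "\<forall>k<n. fst \<omega> k \<in> K" "snd \<omega> \<in> K" using Q_space by auto
    have b1: "norm (\<Sum>k<n. fst \<omega> k - x0) \<le> real n * diameter K"
      using s by (intro sum_bound_K[OF cK x0]) auto
    have "dist (snd \<omega>) x0 \<le> diameter K"
      by (rule diameter_bounded_bound[OF compact_imp_bounded[OF cK] s(2) x0])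
    then have b2: "norm (a *\<^sub>R (snd \<omega> - x0)) \<le> a * diameter K"
      using a by (simp add: dist_norm mult_left_mono)
    have e: "(real n + a) * diameter K = a * diameter K + real n * diameter K" by (simp add: algebra_simps)
    have "norm (a *\<^sub>R (snd \<omega> - x0) + (\<Sum>k<n. fst \<omega> k - x0)) \<le> (real n + a) * diameter K"
      using norm_triangle_ineq[of "a *\<^sub>R (snd \<omega> - x0)" "\<Sum>k<n. fst \<omega> k - x0"] b1 b2
      unfolding e by linarith
    then show "\<bar>H \<omega>\<bar> \<le> ((real n + a) * diameter K)\<^sup>2"
      unfolding H_def by (simp add: case_prod_beta power_mono)
  qed
  have cbH: "(norm (cb \<omega> - x0))\<^sup>2 = H \<omega> / (real n + a)\<^sup>2" for \<omega>
  proof -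
    have sqi: "(inverse c * x)\<^sup>2 = x\<^sup>2 / c\<^sup>2" for x c :: real
      by (simp add: power_mult_distrib power_inverse divide_inverse mult.commute)
    show ?thesis
      unfolding cb_diff H_def using pos
      by (simp add: case_prod_beta add.commute sqi)
  qed
  show "integrable (PiM {..<n} (\<lambda>_. N) \<Otimes>\<^sub>M M) (\<lambda>\<omega>. (norm (cb \<omega> - x0))\<^sup>2)"
    unfolding cbH using Hi by simp
  have "(\<integral>\<omega>. (norm (cb \<omega> - x0))\<^sup>2 \<partial>(PiM {..<n} (\<lambda>_. N) \<Otimes>\<^sub>M M)) = integral\<^sup>L (PiM {..<n} (\<lambda>_. N) \<Otimes>\<^sub>M M) H / (real n + a)\<^sup>2"
    unfolding cbH by simp
  also have "integral\<^sup>L (PiM {..<n} (\<lambda>_. N) \<Otimes>\<^sub>M M) H = (\<integral>y. (\<integral>xs. (norm (a *\<^sub>R (y - x0) + (\<Sum>k<n. xs k - x0)))\<^sup>2 \<partial>(PiM {..<n} (\<lambda>_. N))) \<partial>M)"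
    unfolding H_def by (rule PQ.integral_snd[symmetric]) (use Hi in \<open>simp add: H_def\<close>)
  also have "\<dots> = (\<integral>y. a\<^sup>2 * (norm (y - x0))\<^sup>2 + real n * V \<partial>M)"
  proof (rule Bochner_Integration.integral_cong[OF refl])
    fix y
    have "(\<integral>xs. (norm (a *\<^sub>R (y - x0) + (\<Sum>k<n. xs k - x0)))\<^sup>2 \<partial>(PiM {..<n} (\<lambda>_. N)))
        = (norm (a *\<^sub>R (y - x0)))\<^sup>2 + real n * V"
      using L0[OF P_prob[OF bpo cK x0 mean, where I="{..<n}"] S_mean(1)[OF bpo cK x0 mean, where n=n] S_mean(2)[OF bpo cK x0 mean, where n=n]
          S_sq_int[OF bpo cK x0 mean, where n=n], where c="a *\<^sub>R (y - x0)"]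
        S_sq[OF bpo cK x0 mean, of n] unfolding V_def by simp
    also have "\<dots> = a\<^sup>2 * (norm (y - x0))\<^sup>2 + real n * V"
      using a by (simp add: power_mult_distrib)
    finally show "(\<integral>xs. (norm (a *\<^sub>R (y - x0) + (\<Sum>k<n. xs k - x0)))\<^sup>2 \<partial>(PiM {..<n} (\<lambda>_. N))) = a\<^sup>2 * (norm (y - x0))\<^sup>2 + real n * V" .
  qed
  also have "\<dots> = a\<^sup>2 * (\<integral>y. (norm (y - x0))\<^sup>2 \<partial>M) + real n * V"
  proof -
    have i: "integrable M (\<lambda>y. (norm (y - x0))\<^sup>2)"
      by (rule bpo_int[OF bpoM cK]) (intro continuous_intros)
    have ic: "integrable M (\<lambda>y. real n * V)"
      using M_prob by (simp add: prob_space.finite_measure finite_measure.integrable_const)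
    have im: "integrable M (\<lambda>y. a\<^sup>2 * (norm (y - x0))\<^sup>2)"
      using i by (rule Bochner_Integration.integrable_mult_right)
    show ?thesis
      using Bochner_Integration.integral_add[OF im ic] i prob_space.prob_space[OF M_prob] by simp
  qed
  finally show "(\<integral>\<omega>. (norm (cb \<omega> - x0))\<^sup>2 \<partial>(PiM {..<n} (\<lambda>_. N) \<Otimes>\<^sub>M M))
     = (a\<^sup>2 * (\<integral>y. (norm (y - x0))\<^sup>2 \<partial>M) + real n * (\<integral>t. (norm (t - x0))\<^sup>2 \<partial>N)) / (real n + a)\<^sup>2"
    unfolding V_def .
qed


lemma main_pt:
  fixes f :: "'a \<Rightarrow> real"
  assumes fc: "continuous_on K f"
  shows "\<bar>(\<integral>\<omega>. f (cb \<omega>) \<partial>(PiM {..<n} (\<lambda>_. N) \<Otimes>\<^sub>M M)) - f x0\<bar>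
     \<le> 2 * modulus K f (sqrt (\<integral>\<omega>. (norm (cb \<omega> - x0))\<^sup>2 \<partial>(PiM {..<n} (\<lambda>_. N) \<Otimes>\<^sub>M M)))"
proof -
  let ?Q = "PiM {..<n} (\<lambda>_. N) \<Otimes>\<^sub>M M"
  have Kne: "K \<noteq> {}" using x0 by blast
  obtain B where B: "\<And>t. t \<in> K \<Longrightarrow> \<bar>f t\<bar> \<le> B" using f_bound[OF cvK cK fc] by blast
  have fin: "finite_measure ?Q" by (rule prob_space.finite_measure[OF Q_prob])
  have cbK: "cb \<in> measurable ?Q (restrict_space borel K)"
    apply (rule measurable_restrict_space2) apply (rule Pi_I) apply (erule cb_in) by (rule cb_meas)
  have fm[measurable]: "(\<lambda>\<omega>. f (cb \<omega>)) \<in> borel_measurable ?Q"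
    using measurable_compose[OF cbK borel_measurable_continuous_on_restrict[OF fc]] .
  define G where "G \<omega> = (norm (cb \<omega> - x0))\<^sup>2" for \<omega>
  define E where "E = integral\<^sup>L ?Q G"
  have Gi: "integrable ?Q G" unfolding G_def by (rule E_int)
  have fi: "integrable ?Q (\<lambda>\<omega>. f (cb \<omega>))"
  proof (rule int_bound[OF fin fm, where B=B])
    fix \<omega> assume "\<omega> \<in> space ?Q"
    then show "\<bar>f (cb \<omega>)\<bar> \<le> B" by (rule B[OF cb_in])
  qed
  have ci: "integrable ?Q (\<lambda>\<omega>. f x0)" by (rule finite_measure.integrable_const[OF fin])
  have Di: "integrable ?Q (\<lambda>\<omega>. f (cb \<omega>) - f x0)"
    using fi ci by (rule Bochner_Integration.integrable_diff)
  have eqC: "(\<integral>\<omega>. f (cb \<omega>) \<partial>?Q) - f x0 = (\<integral>\<omega>. f (cb \<omega>) - f x0 \<partial>?Q)"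
    using Bochner_Integration.integral_diff[OF fi ci] prob_space.prob_space[OF Q_prob] by simp
  have absb: "\<bar>\<integral>\<omega>. f (cb \<omega>) - f x0 \<partial>?Q\<bar> \<le> (\<integral>\<omega>. \<bar>f (cb \<omega>) - f x0\<bar> \<partial>?Q)"
    using integral_norm_bound[of ?Q "\<lambda>\<omega>. f (cb \<omega>) - f x0"] by simp
  have E0: "E \<ge> 0" unfolding E_def G_def by (rule Bochner_Integration.integral_nonneg) simp
  have EE: "(\<integral>\<omega>. (norm (cb \<omega> - x0))\<^sup>2 \<partial>?Q) = E" unfolding E_def G_def ..
  have "\<bar>(\<integral>\<omega>. f (cb \<omega>) \<partial>?Q) - f x0\<bar> \<le> 2 * modulus K f (sqrt E)"
  proof (cases "E = 0")
    case True
    have "AE \<omega> in ?Q. G \<omega> = 0"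
      using integral_nonneg_eq_0_iff_AE[OF Gi] True unfolding E_def G_def by simp
    then have "AE \<omega> in ?Q. \<bar>f (cb \<omega>) - f x0\<bar> = 0"
      by (rule eventually_mono) (simp add: G_def)
    then have "(\<integral>\<omega>. \<bar>f (cb \<omega>) - f x0\<bar> \<partial>?Q) = 0"
      by (rule integral_eq_zero_AE)
    then show ?thesis using eqC absb mod_nonneg[OF cvK cK fc Kne, of 0] True by simp
  next
    case False
    then have Ep: "E > 0" using E0 by simp
    define d where "d = sqrt E"
    have dp: "d > 0" and d2: "d\<^sup>2 = E" using Ep unfolding d_def by auto
    define m where "m = modulus K f d"
    have ri: "integrable ?Q (\<lambda>\<omega>. m + (m / d\<^sup>2) * G \<omega>)"
      using finite_measure.integrable_const[OF fin] Bochner_Integration.integrable_mult_right[OF Gi]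
      by (rule Bochner_Integration.integrable_add)
    have "(\<integral>\<omega>. \<bar>f (cb \<omega>) - f x0\<bar> \<partial>?Q) \<le> (\<integral>\<omega>. m + (m / d\<^sup>2) * G \<omega> \<partial>?Q)"
    proof (rule Bochner_Integration.integral_mono[OF integrable_abs[OF Di] ri])
      fix \<omega> assume "\<omega> \<in> space ?Q"
      then have "\<bar>f (cb \<omega>) - f x0\<bar> \<le> (1 + (norm (cb \<omega> - x0))\<^sup>2 / d\<^sup>2) * m"
        unfolding m_def by (rule mod_quad[OF cvK cK fc Kne cb_in x0 dp])
      also have "\<dots> = m + (m / d\<^sup>2) * G \<omega>" unfolding G_def by (simp add: ring_distribs)
      finally show "\<bar>f (cb \<omega>) - f x0\<bar> \<le> m + (m / d\<^sup>2) * G \<omega>" .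
    qed
    also have "\<dots> = (\<integral>\<omega>. m \<partial>?Q) + (\<integral>\<omega>. (m / d\<^sup>2) * G \<omega> \<partial>?Q)"
      by (rule Bochner_Integration.integral_add[OF finite_measure.integrable_const[OF fin] Bochner_Integration.integrable_mult_right[OF Gi]])
    also have "\<dots> = m + (m / d\<^sup>2) * E"
      using prob_space.prob_space[OF Q_prob] unfolding E_def by simp
    also have "\<dots> = 2 * m" using d2 Ep by simp
    finally have "(\<integral>\<omega>. \<bar>f (cb \<omega>) - f x0\<bar> \<partial>?Q) \<le> 2 * modulus K f (sqrt E)"
      unfolding m_def d_def .
    then show ?thesis using eqC absb by linarith
  qed
  then show ?thesis unfolding EE .
qed

end

theorem proposition3p4:
  fixes K :: "'a::euclidean_space set"
    and T :: "('a \<Rightarrow> real) \<Rightarrow> ('a \<Rightarrow> real)"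
    and nu :: "'a \<Rightarrow> 'a measure"
    and mu :: "nat \<Rightarrow> 'a measure"
    and a :: real
  assumes K: "convex K" "compact K" "K \<noteq> {}"
    and T: "markov_operator K T"
    and T_aff: "\<And>b c x. x \<in> K \<Longrightarrow> T (\<lambda>y. inner b y + c) x = inner b x + c"
    and nu: "\<And>x. x \<in> K \<Longrightarrow> borel_prob_on K (nu x)"
    and nu_T: "\<And>x f. x \<in> K \<Longrightarrow> continuous_on K f \<Longrightarrow> integral\<^sup>L (nu x) f = T f x"
    and a: "a \<ge> 0"
    and mu: "\<And>n. n \<ge> 1 \<Longrightarrow> borel_prob_on K (mu n)"
  shows "(\<forall>f n x. continuous_on K f \<longrightarrow> n \<ge> 1 \<longrightarrow> x \<in> K \<longrightarrow>
            \<bar>C_op nu (mu n) a n f x - f x\<bar>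
              \<le> 2 * modulus K f (1 / (real n + a) *
                   sqrt (a\<^sup>2 * integral\<^sup>L (mu n) (\<lambda>y. (norm (y - x))\<^sup>2)
                         + real n * (T e2 x - e2 x))))
       \<and> (\<forall>f n. continuous_on K f \<longrightarrow> n \<ge> 1 \<longrightarrow>
            Sup ((\<lambda>x. \<bar>C_op nu (mu n) a n f x - f x\<bar>) ` K)
              \<le> 2 * modulus K f (sqrt (max (a * (diameter K)\<^sup>2)
                                             (Sup ((\<lambda>x. \<bar>T e2 x - e2 x\<bar>) ` K))
                                         / (real n + a))))"
proof -
  have ce2: "continuous_on K e2" unfolding e2_def by (intro continuous_intros)
  have mean: "(\<integral>t. inner c (t - x) \<partial>nu x) = 0" if xK: "x \<in> K" for x c
  proof -
    have "(\<integral>t. inner c (t - x) \<partial>nu x) = (\<integral>t. inner c t + (- inner c x) \<partial>nu x)"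
      by (simp add: inner_diff_right)
    also have "\<dots> = T (\<lambda>t. inner c t + (- inner c x)) x"
      by (rule nu_T[OF xK]) (intro continuous_intros)
    also have "\<dots> = 0" using T_aff[OF xK, of c "- inner c x"] by simp
    finally show ?thesis .
  qed
  have VT: "(\<integral>t. (norm (t - x))\<^sup>2 \<partial>nu x) = T e2 x - e2 x" if xK: "x \<in> K" for x
  proof -
    have eq: "(norm (t - x))\<^sup>2 = e2 t + (inner (-2 *\<^sub>R x) t + e2 x)" for t
      unfolding e2_def by (simp add: power2_norm_eq_inner inner_diff_left inner_diff_right inner_commute algebra_simps)
    have i1: "integrable (nu x) e2" by (rule bpo_int[OF nu[OF xK] K(2) ce2])
    have i2: "integrable (nu x) (\<lambda>t. inner (-2 *\<^sub>R x) t + e2 x)"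
      by (rule bpo_int[OF nu[OF xK] K(2)]) (intro continuous_intros)
    have "(\<integral>t. (norm (t - x))\<^sup>2 \<partial>nu x) = (\<integral>t. e2 t + (inner (-2 *\<^sub>R x) t + e2 x) \<partial>nu x)"
      by (simp only: eq)
    also have "\<dots> = integral\<^sup>L (nu x) e2 + (\<integral>t. inner (-2 *\<^sub>R x) t + e2 x \<partial>nu x)"
      by (rule Bochner_Integration.integral_add[OF i1 i2])
    also have "\<dots> = T e2 x + T (\<lambda>t. inner (-2 *\<^sub>R x) t + e2 x) x"
      using nu_T[OF xK ce2] nu_T[OF xK, of "\<lambda>t. inner (-2 *\<^sub>R x) t + e2 x"] by (simp add: continuous_intros)
    also have "\<dots> = T e2 x - e2 x"
      using T_aff[OF xK, of "-2 *\<^sub>R x" "e2 x"] unfolding e2_def by (simp add: power2_norm_eq_inner)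
    finally show ?thesis .
  qed
  have part1: "\<bar>C_op nu (mu n) a n f x - f x\<bar>
              \<le> 2 * modulus K f (1 / (real n + a) *
                   sqrt (a\<^sup>2 * integral\<^sup>L (mu n) (\<lambda>y. (norm (y - x))\<^sup>2)
                         + real n * (T e2 x - e2 x)))"
    if fc: "continuous_on K f" and n1: "n \<ge> 1" and xK: "x \<in> K" for f n x
  proof -
    note hyps = nu[OF xK] K(2) K(1) xK mean[OF xK] mu[OF n1] n1 a
    have pos: "real n + a > 0" using n1 a by (simp add: add_pos_nonneg)
    have C: "C_op nu (mu n) a n f x = (\<integral>\<omega>. f (cb n a \<omega>) \<partial>(PiM {..<n} (\<lambda>_. nu x) \<Otimes>\<^sub>M mu n))"
      unfolding C_op_def cb_def[OF hyps] by (simp add: case_prod_beta')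
    define A where "A = a\<^sup>2 * integral\<^sup>L (mu n) (\<lambda>y. (norm (y - x))\<^sup>2) + real n * (T e2 x - e2 x)"
    have E: "(\<integral>\<omega>. (norm (cb n a \<omega> - x))\<^sup>2 \<partial>(PiM {..<n} (\<lambda>_. nu x) \<Otimes>\<^sub>M mu n))
        = A / (real n + a)\<^sup>2"
      using E_eq[OF hyps] VT[OF xK] unfolding A_def by simp
    have sq: "sqrt (A / (real n + a)\<^sup>2) = 1 / (real n + a) * sqrt A"
      using pos by (simp add: real_sqrt_divide)
    show ?thesis
      using main_pt[OF hyps fc] unfolding C E sq unfolding A_def .
  qed
  show ?thesis
  proof (intro conjI allI impI)
    fix f :: "'a \<Rightarrow> real" and n :: nat and x :: 'a assume "continuous_on K f" "n \<ge> 1" "x \<in> K"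
    then show "\<bar>C_op nu (mu n) a n f x - f x\<bar>
              \<le> 2 * modulus K f (1 / (real n + a) *
                   sqrt (a\<^sup>2 * integral\<^sup>L (mu n) (\<lambda>y. (norm (y - x))\<^sup>2)
                         + real n * (T e2 x - e2 x)))" by (rule part1)
  next
    fix f :: "'a \<Rightarrow> real" and n :: nat assume fc: "continuous_on K f" and n1: "n \<ge> 1"
    define S where "S = Sup ((\<lambda>x. \<bar>T e2 x - e2 x\<bar>) ` K)"
    define D where "D = max (a * (diameter K)\<^sup>2) S / (real n + a)"
    have pos: "real n + a > 0" using n1 a by (simp add: add_pos_nonneg)
    have "\<forall>f. continuous_on K f \<longrightarrow> continuous_on K (T f)"
      using T unfolding markov_operator_def by (elim conjE)
    then have cT: "continuous_on K (T e2)" using ce2 by blast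
    have "bounded ((\<lambda>x. \<bar>T e2 x - e2 x\<bar>) ` K)"
      by (intro compact_imp_bounded compact_continuous_image K(2) continuous_intros cT ce2)
    then have bddS: "bdd_above ((\<lambda>x. \<bar>T e2 x - e2 x\<bar>) ` K)" by (rule bounded_imp_bdd_above)
    show "Sup ((\<lambda>x. \<bar>C_op nu (mu n) a n f x - f x\<bar>) ` K) \<le> 2 * modulus K f (sqrt D)"
    proof (rule cSup_least)
      show "(\<lambda>x. \<bar>C_op nu (mu n) a n f x - f x\<bar>) ` K \<noteq> {}" using K(3) by blast
      fix z assume "z \<in> (\<lambda>x. \<bar>C_op nu (mu n) a n f x - f x\<bar>) ` K"
      then obtain x where xK: "x \<in> K" and z: "z = \<bar>C_op nu (mu n) a n f x - f x\<bar>" by blast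
      define I where "I = integral\<^sup>L (mu n) (\<lambda>y. (norm (y - x))\<^sup>2)"
      define Vx where "Vx = T e2 x - e2 x"
      have bM: "borel_prob_on K (mu n)" by (rule mu[OF n1])
      have I0: "I \<ge> 0" unfolding I_def by (rule Bochner_Integration.integral_nonneg) simp
      have V0: "Vx \<ge> 0" unfolding Vx_def VT[OF xK, symmetric] by (rule Bochner_Integration.integral_nonneg) simp
      have Id: "I \<le> (diameter K)\<^sup>2"
      proof -
        have "I \<le> (\<integral>y. (diameter K)\<^sup>2 \<partial>mu n)" unfolding I_def
        proof (rule Bochner_Integration.integral_mono)
          show "integrable (mu n) (\<lambda>y. (norm (y - x))\<^sup>2)"
            by (rule bpo_int[OF bM K(2)]) (intro continuous_intros)
          show "integrable (mu n) (\<lambda>y. (diameter K)\<^sup>2)"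
            using bpo_prob[OF bM] by (simp add: prob_space.finite_measure finite_measure.integrable_const)
          fix y assume "y \<in> space (mu n)"
          then have "y \<in> K" using bpo_space[OF bM] by simp
          then have "dist y x \<le> diameter K"
            by (rule diameter_bounded_bound[OF compact_imp_bounded[OF K(2)] _ xK])
          then show "(norm (y - x))\<^sup>2 \<le> (diameter K)\<^sup>2" by (simp add: dist_norm power_mono)
        qed
        also have "\<dots> = (diameter K)\<^sup>2" using prob_space.prob_space[OF bpo_prob[OF bM]] by simp
        finally show ?thesis .
      qed
      have VS: "Vx \<le> S"
      proof -
        have "\<bar>T e2 x - e2 x\<bar> \<le> S" unfolding S_def by (rule cSup_upper[OF imageI[OF xK] bddS])
        then show ?thesis unfolding Vx_def by linarith
      qed
      define Mx where "Mx = max (a * (diameter K)\<^sup>2) S"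
      have A_le: "a\<^sup>2 * I + real n * Vx \<le> (real n + a) * Mx"
      proof -
        have "a\<^sup>2 * I \<le> a * (a * (diameter K)\<^sup>2)"
          using Id a by (simp add: power2_eq_square mult_left_mono mult.assoc)
        also have "\<dots> \<le> a * Mx" unfolding Mx_def using a by (simp add: mult_left_mono)
        finally have h1: "a\<^sup>2 * I \<le> a * Mx" .
        have h2: "real n * Vx \<le> real n * Mx" unfolding Mx_def using VS by (simp add: mult_left_mono)
        show ?thesis using h1 h2 by (simp add: algebra_simps)
      qed
      have A0: "a\<^sup>2 * I + real n * Vx \<ge> 0" using I0 V0 by simp
      have "1 / (real n + a) * sqrt (a\<^sup>2 * I + real n * Vx) = sqrt ((a\<^sup>2 * I + real n * Vx) / (real n + a)\<^sup>2)"
        using pos by (simp add: real_sqrt_divide)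
      also have "\<dots> \<le> sqrt D"
      proof (rule real_sqrt_le_mono)
        have "(a\<^sup>2 * I + real n * Vx) / (real n + a)\<^sup>2 \<le> ((real n + a) * Mx) / (real n + a)\<^sup>2"
          using A_le pos by (simp add: divide_right_mono)
        also have "\<dots> = D" unfolding D_def Mx_def using pos by (simp add: power2_eq_square)
        finally show "(a\<^sup>2 * I + real n * Vx) / (real n + a)\<^sup>2 \<le> D" .
      qed
      finally have dle: "1 / (real n + a) * sqrt (a\<^sup>2 * I + real n * Vx) \<le> sqrt D" .
      have d0: "0 \<le> 1 / (real n + a) * sqrt (a\<^sup>2 * I + real n * Vx)" using pos A0 by simp
      have "z \<le> 2 * modulus K f (1 / (real n + a) * sqrt (a\<^sup>2 * I + real n * Vx))"
        unfolding z I_def Vx_def using part1[OF fc n1 xK] .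
      also have "\<dots> \<le> 2 * modulus K f (sqrt D)"
        using mod_mono[OF K(1) K(2) fc K(3) d0 dle] by simp
      finally show "z \<le> 2 * modulus K f (sqrt D)" .
    qed
  qed
qed

end
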